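(* Fix $p\ge2$ and positive integers $\ell,t$. For each $n$ let $\mathcal{C}_n\subseteq\mathbb{Z}_p^n$ be a $t$-tandem-duplication-correcting code with respect to duplication length $\ell$. Then $$\limsup_{n\to\infty}\frac{|\mathcal{C}_n|}{\;t!\,p^{n+t(\ell+1)}/(n(p-1))^t\;}\le 1.$$
   Context: $\mathbb{Z}_p=\{0,1,\dots,p-1\}$. For a word $\mathbf{x}$ over $\mathbb{Z}_p$ and $0\le i\le|\mathbf{x}|-\ell$, write $\mathbf{x}=\mathbf{u}\mathbf{v}\mathbf{w}$ with $|\mathbf{u}|=i$, $|\mathbf{v}|=\ell$; the tandem duplication of length $\ell$ at position $i$ produces $\mathbf{u}\mathbf{v}\mathbf{v}\mathbf{w}$. The ball $B_t^{\tau_\ell}(\mathbf{x})$ is the set of words obtainable from $\mathbf{x}$ by at most $t$ successive tandem duplications of length $\ell$. A code $\mathcal{C}\subseteq\mathbb{Z}_p^n$ is $t$-tandem-duplication-correcting (duplication length $\ell$) if $B_t^{\tau_\ell}(\mathbf{c})\cap B_t^{\tau_\ell}(\mathbf{c}')=\emptyset$ for all distinct $\mathbf{c},\mathbf{c}'\in\mathcal{C}$. *)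

theory Defs
  imports Complex_Main "HOL-Library.Extended_Real"
begin

definition Zp_words :: "nat \<Rightarrow> nat \<Rightarrow> nat list set" where
  "Zp_words p n = {x. length x = n \<and> set x \<subseteq> {0..<p}}"

definition tandem_dup :: "nat \<Rightarrow> nat \<Rightarrow> 'a list \<Rightarrow> 'a list" where
  "tandem_dup l i x = take i x @ take l (drop i x) @ drop i x"

definition dup_step :: "nat \<Rightarrow> 'a list \<Rightarrow> 'a list \<Rightarrow> bool" where
  "dup_step l x y \<longleftrightarrow> (\<exists>i. i + l \<le> length x \<and> y = tandem_dup l i x)"

definition dup_ball :: "nat \<Rightarrow> nat \<Rightarrow> 'a list \<Rightarrow> 'a list set" where
  "dup_ball l t x = {y. \<exists>k\<le>t. (dup_step l ^^ k) x y}"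

definition tdc_code :: "nat \<Rightarrow> nat \<Rightarrow> nat \<Rightarrow> nat \<Rightarrow> nat list set \<Rightarrow> bool" where
  "tdc_code p n l t C \<longleftrightarrow> C \<subseteq> Zp_words p n \<and>
     (\<forall>c\<in>C. \<forall>c'\<in>C. c \<noteq> c' \<longrightarrow> dup_ball l t c \<inter> dup_ball l t c' = {})"

end

theory Submission
  imports Defs
begin

definition Pset :: "nat \<Rightarrow> nat list \<Rightarrow> nat set" where
  "Pset l x = {g. g + l < length x \<and> x ! g \<noteq> x ! (g + l)}"

fun build :: "nat \<Rightarrow> nat list \<Rightarrow> nat list \<Rightarrow> nat list" where
  "build l x [] = x"
| "build l x (g # gs) = take g x @ take l (drop g x) @ build l (drop g x) gs"

fun valid :: "nat \<Rightarrow> nat list \<Rightarrow> nat list \<Rightarrow> bool" where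
  "valid l x [] = True"
| "valid l x (g # gs) = (g \<in> Pset l x \<and> valid l (drop g x) gs)"

lemma finite_Pset: "finite (Pset l x)"
  unfolding Pset_def by (rule finite_subset[of _ "{..<length x}"]) auto

lemma build_length: "valid l x gs \<Longrightarrow> length (build l x gs) = length x + l * length gs"
  by (induction gs arbitrary: x) (auto simp: Pset_def)

lemma build_set: "valid l x gs \<Longrightarrow> set (build l x gs) \<subseteq> set x"
proof (induction gs arbitrary: x)
  case Nil then show ?case by simp
next
  case (Cons g gs)
  then have "set (build l (drop g x) gs) \<subseteq> set (drop g x)" by simp
  moreover have "set (drop g x) \<subseteq> set x" by (rule set_drop_subset)
  moreover have "set (take g x) \<subseteq> set x" by (rule set_take_subset)
  moreover have "set (take l (drop g x)) \<subseteq> set x" by (meson order.trans set_take_subset set_drop_subset)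
  ultimately show ?case by auto
qed

lemma build_take: "valid l x (h # hs) \<Longrightarrow> take (h + l) (build l x (h # hs)) = take (h + l) x"
proof -
  assume "valid l x (h # hs)"
  then have "h + l < length x" by (simp add: Pset_def)
  then have "take (h + l) (take h x @ take l (drop h x) @ build l (drop h x) hs)
      = take h x @ take l (drop h x)" by simp
  also have "\<dots> = take (h + l) x" by (simp add: take_add)
  finally show ?thesis by simp
qed

lemma build_take_l: "valid l x gs \<Longrightarrow> take l (build l x gs) = take l x"
proof (cases gs)
  case Nil then show ?thesis by simp
next
  case (Cons h hs)
  assume v: "valid l x gs"
  have "take l (build l x gs) = take l (take (h + l) (build l x gs))" by simp
  also have "\<dots> = take l (take (h + l) x)" using build_take v Cons by metis
  also have "\<dots> = take l x" by simp
  finally show ?thesis .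
qed

lemma build_nth0: "valid l x gs \<Longrightarrow> 0 < l \<Longrightarrow> 0 < length x \<Longrightarrow> build l x gs ! 0 = x ! 0"
proof -
  assume a: "valid l x gs" "0 < l" "0 < length x"
  then have "take l (build l x gs) ! 0 = take l x ! 0" using build_take_l by metis
  moreover have "length (build l x gs) > 0" using build_length[OF a(1)] a by simp
  ultimately show ?thesis using a by simp
qed

lemma build_at: "valid l x (g # gs) \<Longrightarrow> 0 < l \<Longrightarrow> build l x (g # gs) ! (g + l) = x ! g"
proof -
  assume a: "valid l x (g # gs)" "0 < l"
  then have lt: "g + l < length x" and v: "valid l (drop g x) gs" by (auto simp: Pset_def)
  have "build l x (g # gs) ! (g + l) = build l (drop g x) gs ! 0"
    using lt by (simp add: nth_append)
  also have "\<dots> = drop g x ! 0" using build_nth0[OF v a(2)] lt by simp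
  also have "\<dots> = x ! g" using lt by simp
  finally show ?thesis .
qed

lemma build_before: "valid l x (h # hs) \<Longrightarrow> i < h + l \<Longrightarrow> build l x (h # hs) ! i = x ! i"
proof -
  assume a: "valid l x (h # hs)" "i < h + l"
  then have "take (h + l) (build l x (h # hs)) ! i = take (h + l) x ! i" using build_take by metis
  then show ?thesis using a by (metis nth_take)
qed

lemma build_inj:
  "valid l x gs \<Longrightarrow> valid l x hs \<Longrightarrow> length gs = length hs \<Longrightarrow> 0 < l \<Longrightarrow>
   build l x gs = build l x hs \<Longrightarrow> gs = hs"
proof (induction gs arbitrary: x hs)
  case Nil then show ?case by simp
next
  case (Cons g gs)
  then obtain h hs' where hs: "hs = h # hs'" by (cases hs) auto
  have P: "g + l < length x" "x ! g \<noteq> x ! (g + l)" "h + l < length x" "x ! h \<noteq> x ! (h + l)"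
    using Cons.prems hs by (auto simp: Pset_def)
  consider "g = h" | "g < h" | "h < g" by linarith
  then show ?case
  proof cases
    case 1
    then have "build l (drop g x) gs = build l (drop g x) hs'" using Cons.prems hs by simp
    then have "gs = hs'" using Cons.IH[of "drop g x" hs'] Cons.prems hs 1 by simp
    then show ?thesis using 1 hs by simp
  next
    case 2
    have "build l x (g # gs) ! (g + l) = x ! g" using build_at Cons.prems by blast
    moreover have "build l x hs ! (g + l) = x ! (g + l)" using build_before Cons.prems hs 2
      by (metis add_less_mono1)
    ultimately show ?thesis using Cons.prems P by simp
  next
    case 3
    have "build l x hs ! (h + l) = x ! h" using build_at Cons.prems hs by blast
    moreover have "build l x (g # gs) ! (h + l) = x ! (h + l)" using build_before Cons.prems 3
      by (metis add_less_mono1)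
    ultimately show ?thesis using Cons.prems P by simp
  qed
qed

lemma dup_step_append: "dup_step l z z' \<Longrightarrow> dup_step l (w @ z) (w @ z')"
proof -
  assume "dup_step l z z'"
  then obtain i where i: "i + l \<le> length z" "z' = tandem_dup l i z" by (auto simp: dup_step_def)
  have "tandem_dup l (length w + i) (w @ z) = w @ z'"
    using i by (simp add: tandem_dup_def)
  moreover have "length w + i + l \<le> length (w @ z)" using i by simp
  ultimately show ?thesis unfolding dup_step_def by metis
qed

lemma dup_pow_append: "(dup_step l ^^ m) z z' \<Longrightarrow> (dup_step l ^^ m) (w @ z) (w @ z')"
proof (induction m arbitrary: z')
  case 0 then show ?case by simp
next
  case (Suc m)
  then obtain y where "(dup_step l ^^ m) z y" "dup_step l y z'" by (auto elim: relpowp_Suc_E)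
  then show ?case using Suc.IH dup_step_append by (meson relpowp_Suc_I)
qed

lemma build_reach: "valid l x gs \<Longrightarrow> (dup_step l ^^ length gs) x (build l x gs)"
proof (induction gs arbitrary: x)
  case Nil then show ?case by simp
next
  case (Cons g gs)
  define B where "B = build l (drop g x) gs"
  have lt: "g + l < length x" and v: "valid l (drop g x) gs" using Cons.prems by (auto simp: Pset_def)
  have r: "(dup_step l ^^ length gs) (take g x @ drop g x) (take g x @ B)"
    using dup_pow_append Cons.IH[OF v] B_def by blast
  have lB: "length B \<ge> l" using build_length[OF v] lt B_def by simp
  have tB: "take l B = take l (drop g x)" using build_take_l[OF v] B_def by simp
  have "tandem_dup l g (take g x @ B) = take g x @ take l (drop g x) @ B"
    using lt tB by (simp add: tandem_dup_def)
  moreover have "g + l \<le> length (take g x @ B)" using lt lB by simp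
  ultimately have "dup_step l (take g x @ B) (build l x (g # gs))"
    unfolding dup_step_def B_def by (metis build.simps(2))
  then show ?case using r relpowp_Suc_I[where P="dup_step l" and n="length gs" and x=x] by simp
qed


definition V :: "nat \<Rightarrow> nat list \<Rightarrow> nat \<Rightarrow> nat list set" where
  "V l x t = {gs. length gs = t \<and> valid l x gs}"

lemma V_0: "V l x 0 = {[]}" by (auto simp: V_def)

lemma V_Suc: "V l x (Suc t) = (\<Union>g\<in>Pset l x. (Cons g) ` V l (drop g x) t)"
  by (auto simp: V_def length_Suc_conv)

lemma finite_V: "finite (V l x t)"
proof (induction t arbitrary: x)
  case 0 then show ?case by (simp add: V_0)
next
  case (Suc t) then show ?case by (simp add: V_Suc finite_Pset)
qed

lemma card_V_Suc: "card (V l x (Suc t)) = (\<Sum>g\<in>Pset l x. card (V l (drop g x) t))"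
proof -
  have "card (\<Union>g\<in>Pset l x. (Cons g) ` V l (drop g x) t) = (\<Sum>g\<in>Pset l x. card ((Cons g) ` V l (drop g x) t))"
    by (rule card_UN_disjoint) (auto simp: finite_Pset finite_V)
  also have "\<dots> = (\<Sum>g\<in>Pset l x. card (V l (drop g x) t))"
    by (intro sum.cong refl card_image) (auto simp: inj_on_def)
  finally show ?thesis by (simp add: V_Suc)
qed

lemma Pset_drop: "card (Pset l (drop g x)) = card {j\<in>Pset l x. g \<le> j}"
proof -
  have "{j\<in>Pset l x. g \<le> j} = (\<lambda>j. j + g) ` Pset l (drop g x)"
  proof (rule set_eqI, rule iffI)
    fix j assume "j \<in> {j\<in>Pset l x. g \<le> j}"
    then have "j - g \<in> Pset l (drop g x)" "j = (j - g) + g" by (auto simp: Pset_def add.commute)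
    then show "j \<in> (\<lambda>j. j + g) ` Pset l (drop g x)" by blast
  next
    fix j assume "j \<in> (\<lambda>j. j + g) ` Pset l (drop g x)"
    then show "j \<in> {j\<in>Pset l x. g \<le> j}" by (auto simp: Pset_def add.commute add.left_commute)
  qed
  then show ?thesis by (simp add: card_image inj_on_def)
qed

lemma sum_rank:
  fixes f :: "nat \<Rightarrow> real" and P :: "nat set"
  shows "finite P \<Longrightarrow> (\<Sum>g\<in>P. f (card {j\<in>P. g \<le> j})) = (\<Sum>i=1..card P. f i)"
proof (induction "card P" arbitrary: P)
  case 0 then show ?case by simp
next
  case (Suc n)
  define m where "m = Min P"
  have ne: "P \<noteq> {}" using Suc by auto
  have mP: "m \<in> P" using Min_in[OF Suc.prems ne] m_def by simp
  have mle: "\<And>j. j \<in> P \<Longrightarrow> m \<le> j" using Suc.prems m_def by simp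
  have cP': "card (P - {m}) = n" using Suc mP by simp
  have fP': "finite (P - {m})" using Suc by simp
  have "(\<Sum>g\<in>P. f (card {j\<in>P. g \<le> j})) = f (card {j\<in>P. m \<le> j}) + (\<Sum>g\<in>P - {m}. f (card {j\<in>P. g \<le> j}))"
    using sum.remove[OF Suc.prems mP] by simp
  also have "{j\<in>P. m \<le> j} = P" using mle by auto
  also have "(\<Sum>g\<in>P - {m}. f (card {j\<in>P. g \<le> j})) = (\<Sum>g\<in>P - {m}. f (card {j\<in>P - {m}. g \<le> j}))"
  proof (rule sum.cong[OF refl])
    fix g assume g: "g \<in> P - {m}"
    then have "m < g" using mle by force
    then have "{j\<in>P. g \<le> j} = {j\<in>P - {m}. g \<le> j}" by auto
    then show "f (card {j\<in>P. g \<le> j}) = f (card {j\<in>P - {m}. g \<le> j})" by simp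
  qed
  also have "\<dots> = (\<Sum>i=1..n. f i)" using Suc.hyps(1)[of "P - {m}"] cP' fP' by simp
  finally show ?case using Suc.hyps(2)[symmetric] by (simp add: add.commute)
qed

lemma pow_diff_le:
  fixes a :: real
  assumes "1 \<le> a"
  shows "a ^ Suc t - (a - 1) ^ Suc t \<le> real (Suc t) * a ^ t"
proof (induction t)
  case 0 then show ?case by simp
next
  case (Suc t)
  have "a ^ Suc (Suc t) - (a - 1) ^ Suc (Suc t) = a * (a ^ Suc t - (a - 1) ^ Suc t) + (a - 1) ^ Suc t"
    by (simp add: algebra_simps)
  also have "\<dots> \<le> a * (real (Suc t) * a ^ t) + a ^ Suc t"
    using Suc assms by (intro add_mono mult_left_mono power_mono) auto
  also have "\<dots> = real (Suc (Suc t)) * a ^ Suc t" by (simp add: algebra_simps)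
  finally show ?case .
qed

lemma div_aux: "(a::real) - b \<le> c * d \<Longrightarrow> c > 0 \<Longrightarrow> a / c \<le> b / c + d"
  by (simp add: field_simps)

lemma pow_sum: "real k ^ Suc t / real (Suc t) \<le> (\<Sum>i=1..k. real i ^ t)"
proof (induction k)
  case 0 then show ?case by simp
next
  case (Suc k)
  have "real (Suc k) ^ Suc t - real k ^ Suc t \<le> real (Suc t) * real (Suc k) ^ t"
    using pow_diff_le[of "real (Suc k)" t] by simp
  then have "real (Suc k) ^ Suc t / real (Suc t) \<le> real k ^ Suc t / real (Suc t) + real (Suc k) ^ t"
    by (rule div_aux) simp
  also have "\<dots> \<le> (\<Sum>i=1..k. real i ^ t) + real (Suc k) ^ t" using Suc by simp
  also have "\<dots> = (\<Sum>i=1..Suc k. real i ^ t)" by simp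
  finally show ?case .
qed

lemma V_lower: "real (card (Pset l x)) ^ t / fact t \<le> real (card (V l x t))"
proof (induction t arbitrary: x)
  case 0 then show ?case by (simp add: V_0)
next
  case (Suc t)
  let ?P = "Pset l x"
  have "real (card (V l x (Suc t))) = (\<Sum>g\<in>?P. real (card (V l (drop g x) t)))"
    by (simp add: card_V_Suc)
  also have "\<dots> \<ge> (\<Sum>g\<in>?P. real (card {j\<in>?P. g \<le> j}) ^ t / fact t)"
  proof (intro sum_mono)
    fix g show "real (card {j\<in>?P. g \<le> j}) ^ t / fact t \<le> real (card (V l (drop g x) t))"
      using Suc.IH[of "drop g x"] by (simp add: Pset_drop)
  qed
  finally have 1: "(\<Sum>g\<in>?P. real (card {j\<in>?P. g \<le> j}) ^ t / fact t) \<le> real (card (V l x (Suc t)))" .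
  have "(\<Sum>g\<in>?P. real (card {j\<in>?P. g \<le> j}) ^ t / fact t) = (\<Sum>i=1..card ?P. real i ^ t / fact t)"
    using sum_rank[OF finite_Pset, of "\<lambda>i. real i ^ t / fact t"] by simp
  also have "\<dots> = (\<Sum>i=1..card ?P. real i ^ t) / fact t" by (simp add: sum_divide_distrib)
  also have "\<dots> \<ge> real (card ?P) ^ Suc t / real (Suc t) / fact t"
    using pow_sum by (intro divide_right_mono) auto
  finally have 2: "real (card ?P) ^ Suc t / real (Suc t) / fact t \<le> real (card (V l x (Suc t)))"
    using 1 by linarith
  have "real (card ?P) ^ Suc t / fact (Suc t) = real (card ?P) ^ Suc t / real (Suc t) / fact t"
    by (simp add: fact_Suc field_simps)
  then show ?case using 2 by simp
qed


lemma W_alt: "Zp_words p n = {xs. set xs \<subseteq> {0..<p} \<and> length xs = n}"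
  by (auto simp: Zp_words_def)

lemma finite_W: "finite (Zp_words p n)"
  unfolding W_alt by (rule finite_lists_length_eq) simp

lemma card_W: "card (Zp_words p n) = p ^ n"
  unfolding W_alt by (subst card_lists_length_eq) simp_all

lemma ball_lower:
  assumes "c \<in> Zp_words p n" "0 < l"
  shows "real (card (Pset l c)) ^ t / fact t \<le> real (card (dup_ball l t c \<inter> Zp_words p (n + l * t)))"
proof -
  have sub: "build l c ` V l c t \<subseteq> dup_ball l t c \<inter> Zp_words p (n + l * t)"
  proof
    fix y assume "y \<in> build l c ` V l c t"
    then obtain gs where gs: "length gs = t" "valid l c gs" "y = build l c gs" by (auto simp: V_def)
    have "(dup_step l ^^ t) c y" using build_reach[OF gs(2)] gs by simp
    then have "y \<in> dup_ball l t c" by (auto simp: dup_ball_def)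
    moreover have "y \<in> Zp_words p (n + l * t)"
      using build_length[OF gs(2)] build_set[OF gs(2)] gs assms(1) by (auto simp: Zp_words_def)
    ultimately show "y \<in> dup_ball l t c \<inter> Zp_words p (n + l * t)" by simp
  qed
  have "inj_on (build l c) (V l c t)"
    using build_inj assms(2) by (auto simp: inj_on_def V_def)
  then have "card (V l c t) = card (build l c ` V l c t)" by (simp add: card_image)
  also have "\<dots> \<le> card (dup_ball l t c \<inter> Zp_words p (n + l * t))"
    using sub by (intro card_mono) (auto simp: finite_W)
  finally show ?thesis using V_lower[of l c t] by linarith
qed

lemma code_sum:
  assumes "tdc_code p n l t C" "0 < l"
  shows "(\<Sum>c\<in>C. real (card (Pset l c)) ^ t / fact t) \<le> real p ^ (n + l * t)"
proof -
  have CW: "C \<subseteq> Zp_words p n" and dis: "\<And>c c'. c \<in> C \<Longrightarrow> c' \<in> C \<Longrightarrow> c \<noteq> c' \<Longrightarrow> dup_ball l t c \<inter> dup_ball l t c' = {}"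
    using assms(1) by (auto simp: tdc_code_def)
  have fC: "finite C" using CW finite_W finite_subset by blast
  let ?B = "\<lambda>c. dup_ball l t c \<inter> Zp_words p (n + l * t)"
  have "(\<Sum>c\<in>C. real (card (Pset l c)) ^ t / fact t) \<le> (\<Sum>c\<in>C. real (card (?B c)))"
    using ball_lower assms(2) CW by (intro sum_mono) blast
  also have "\<dots> = real (\<Sum>c\<in>C. card (?B c))" by simp
  also have "(\<Sum>c\<in>C. card (?B c)) = card (\<Union>c\<in>C. ?B c)"
    using dis fC by (intro card_UN_disjoint[symmetric]) (auto simp: finite_W)
  also have "card (\<Union>c\<in>C. ?B c) \<le> card (Zp_words p (n + l * t))"
    by (intro card_mono finite_W) auto
  finally show ?thesis by (simp add: card_W)
qed

lemma Pset_snoc: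
  assumes "length x = n" "l \<le> n" "0 < l"
  shows "card (Pset l (x @ [a])) = card (Pset l x) + (if x ! (n - l) \<noteq> a then 1 else 0)"
proof -
  have eq: "Pset l (x @ [a]) = Pset l x \<union> (if x ! (n - l) \<noteq> a then {n - l} else {})"
  proof (rule set_eqI)
    fix g
    show "g \<in> Pset l (x @ [a]) \<longleftrightarrow> g \<in> Pset l x \<union> (if x ! (n - l) \<noteq> a then {n - l} else {})"
    proof (cases "g + l < n")
      case True then show ?thesis using assms by (auto simp: Pset_def nth_append)
    next
      case False
      show ?thesis
      proof (cases "g + l = n")
        case True
        then have "g = n - l" by simp
        then show ?thesis using assms True by (auto simp: Pset_def nth_append)
      next
        case False
        then show ?thesis using assms \<open>\<not> g + l < n\<close> by (auto simp: Pset_def nth_append)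
      qed
    qed
  qed
  have "n - l \<notin> Pset l x" using assms by (auto simp: Pset_def)
  then show ?thesis unfolding eq using finite_Pset by auto
qed

lemma W_Suc: "Zp_words p (Suc n) = (\<lambda>(x, a). x @ [a]) ` (Zp_words p n \<times> {0..<p})"
proof (rule set_eqI, rule iffI)
  fix y assume y: "y \<in> Zp_words p (Suc n)"
  then have "y \<noteq> []" by (auto simp: Zp_words_def)
  then have yy: "y = butlast y @ [last y]" by simp
  have "last y \<in> set y" using \<open>y \<noteq> []\<close> by simp
  then have "last y \<in> {0..<p}" using y by (auto simp: Zp_words_def)
  moreover have "butlast y \<in> Zp_words p n"
    using y \<open>y \<noteq> []\<close> by (auto simp: Zp_words_def dest: in_set_butlastD)
  ultimately show "y \<in> (\<lambda>(x, a). x @ [a]) ` (Zp_words p n \<times> {0..<p})"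
    using yy by (metis (no_types, lifting) SigmaI image_eqI case_prod_conv)
qed (auto simp: Zp_words_def)

lemma inner_sum:
  fixes lam :: real
  assumes "b < p"
  shows "(\<Sum>a\<in>{0..<p}. lam ^ (if b \<noteq> a then 1 else 0)) = 1 + real (p - 1) * lam"
proof -
  have "(\<Sum>a\<in>{0..<p}. lam ^ (if b \<noteq> a then 1 else 0)) =
        lam ^ (if b \<noteq> b then 1 else 0) + (\<Sum>a\<in>{0..<p} - {b}. lam ^ (if b \<noteq> a then 1 else 0))"
    using assms by (intro sum.remove) auto
  also have "(\<Sum>a\<in>{0..<p} - {b}. lam ^ (if b \<noteq> a then 1 else 0)) = (\<Sum>a\<in>{0..<p} - {b}. lam)"
    by (intro sum.cong) auto
  also have "\<dots> = real (p - 1) * lam" using assms by simp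
  finally show ?thesis by simp
qed

lemma gen_fun:
  fixes lam :: real
  assumes "0 < l"
  shows "(\<Sum>x\<in>Zp_words p (l + d). lam ^ card (Pset l x)) = real p ^ l * (1 + real (p - 1) * lam) ^ d"
proof (induction d)
  case 0
  have "\<And>x. x \<in> Zp_words p l \<Longrightarrow> Pset l x = {}" by (auto simp: Pset_def Zp_words_def)
  then have "(\<Sum>x\<in>Zp_words p (l + 0). lam ^ card (Pset l x)) = (\<Sum>x\<in>Zp_words p l. 1)" by simp
  then show ?case by (simp add: card_W)
next
  case (Suc d)
  let ?n = "l + d"
  have inj: "inj_on (\<lambda>(x, a). x @ [a]) (Zp_words p ?n \<times> {0..<p})"
    by (auto simp: inj_on_def)
  have "(\<Sum>y\<in>Zp_words p (l + Suc d). lam ^ card (Pset l y)) =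
        (\<Sum>(x, a)\<in>Zp_words p ?n \<times> {0..<p}. lam ^ card (Pset l (x @ [a])))"
    using sum.reindex[OF inj, of "\<lambda>y. lam ^ card (Pset l y)"] W_Suc[of p ?n]
    by (simp add: comp_def case_prod_unfold)
  also have "\<dots> = (\<Sum>x\<in>Zp_words p ?n. \<Sum>a\<in>{0..<p}. lam ^ card (Pset l (x @ [a])))"
    by (simp add: sum.cartesian_product)
  also have "\<dots> = (\<Sum>x\<in>Zp_words p ?n. lam ^ card (Pset l x) * (1 + real (p - 1) * lam))"
  proof (rule sum.cong[OF refl])
    fix x assume x: "x \<in> Zp_words p ?n"
    then have lx: "length x = ?n" and sx: "set x \<subseteq> {0..<p}" by (auto simp: Zp_words_def)
    then have b: "x ! (?n - l) < p" using assms nth_mem[of d x] by (auto simp: subset_iff)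
    have "(\<Sum>a\<in>{0..<p}. lam ^ card (Pset l (x @ [a]))) =
          (\<Sum>a\<in>{0..<p}. lam ^ card (Pset l x) * lam ^ (if x ! (?n - l) \<noteq> a then 1 else 0))"
      using Pset_snoc[OF lx _ assms] by (intro sum.cong refl) (simp add: power_add)
    also have "\<dots> = lam ^ card (Pset l x) * (\<Sum>a\<in>{0..<p}. lam ^ (if x ! (?n - l) \<noteq> a then 1 else 0))"
      by (simp add: sum_distrib_left)
    also have "\<dots> = lam ^ card (Pset l x) * (1 + real (p - 1) * lam)"
      using inner_sum[OF b] by simp
    finally show "(\<Sum>a\<in>{0..<p}. lam ^ card (Pset l (x @ [a]))) = lam ^ card (Pset l x) * (1 + real (p - 1) * lam)" .
  qed
  also have "\<dots> = real p ^ l * (1 + real (p - 1) * lam) ^ Suc d"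
    using Suc by (simp add: sum_distrib_right[symmetric])
  finally show ?case .
qed


lemma pointwise:
  fixes lam K :: real
  assumes "0 < K" "0 < lam" "lam \<le> 1"
  shows "1 \<le> (real k / K) ^ t + lam ^ k * lam powr (- K)"
proof (cases "K \<le> real k")
  case True
  then have "1 \<le> (real k / K) ^ t" using assms by (intro one_le_power) simp
  moreover have "0 \<le> lam ^ k * lam powr (- K)" using assms by simp
  ultimately show ?thesis by linarith
next
  case False
  have "lam ^ k * lam powr (- K) = lam powr (real k - K)"
    using assms by (simp add: powr_realpow[symmetric] powr_add[symmetric])
  also have "\<dots> \<ge> 1" using False assms powr_mono2'[of "real k - K" lam 1] by simp
  finally have "1 \<le> lam ^ k * lam powr (- K)" .
  moreover have "0 \<le> (real k / K) ^ t" using assms by simp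
  ultimately show ?thesis by linarith
qed

lemma card_bound:
  fixes lam K :: real
  assumes code: "tdc_code p n l t C" and l: "0 < l" and nl: "l \<le> n"
    and K: "0 < K" and lam: "0 < lam" "lam \<le> 1"
  shows "real (card C) \<le> fact t * real p ^ (n + l * t) / K ^ t
           + lam powr (- K) * (real p ^ l * (1 + real (p - 1) * lam) ^ (n - l))"
proof -
  have CW: "C \<subseteq> Zp_words p n" using code by (simp add: tdc_code_def)
  have fC: "finite C" using CW finite_W finite_subset by blast
  let ?k = "\<lambda>c. real (card (Pset l c))"
  have "real (card C) = (\<Sum>c\<in>C. 1)" by simp
  also have "\<dots> \<le> (\<Sum>c\<in>C. (?k c / K) ^ t + lam ^ card (Pset l c) * lam powr (- K))"
    using pointwise[OF K lam] by (intro sum_mono) auto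
  also have "\<dots> = (fact t / K ^ t) * (\<Sum>c\<in>C. ?k c ^ t / fact t)
                   + lam powr (- K) * (\<Sum>c\<in>C. lam ^ card (Pset l c))"
    by (simp add: sum.distrib sum_distrib_left sum_distrib_right power_divide mult.commute)
  also have "\<dots> \<le> (fact t / K ^ t) * real p ^ (n + l * t)
                   + lam powr (- K) * (\<Sum>c\<in>Zp_words p n. lam ^ card (Pset l c))"
  proof (intro add_mono mult_left_mono)
    show "(\<Sum>c\<in>C. ?k c ^ t / fact t) \<le> real p ^ (n + l * t)" by (rule code_sum[OF code l])
    show "(\<Sum>c\<in>C. lam ^ card (Pset l c)) \<le> (\<Sum>c\<in>Zp_words p n. lam ^ card (Pset l c))"
      using lam CW by (intro sum_mono2 finite_W) auto
  qed (use K lam in auto)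
  also have "(\<Sum>c\<in>Zp_words p n. lam ^ card (Pset l c)) = real p ^ l * (1 + real (p - 1) * lam) ^ (n - l)"
    using gen_fun[OF l, where p=p and lam=lam and d="n - l"] nl by simp
  finally show ?thesis by simp
qed


lemma exists_lam:
  fixes P dl :: real
  assumes "0 < dl" "dl < (P - 1) / P" "1 < P"
  shows "\<exists>lam. 0 < lam \<and> lam < 1 \<and> lam powr (- dl) * (1 + (P - 1) * lam) / P < 1"
proof -
  let ?f = "\<lambda>x::real. x powr (- dl) * (1 + (P - 1) * x) / P"
  have "(?f has_real_derivative ((- dl) * 1 powr (- dl - 1) * (1 + (P - 1) * 1) / P + 1 powr (- dl) * (P - 1) / P)) (at 1)"
    by (auto intro!: derivative_eq_intros simp: field_simps)
  moreover have "(- dl) * 1 powr (- dl - 1) * (1 + (P - 1) * 1) / P + 1 powr (- dl) * (P - 1) / P = (P - 1) / P - dl"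
    using assms by (simp add: field_simps)
  ultimately have d: "(?f has_real_derivative ((P - 1) / P - dl)) (at 1)" by simp
  obtain d where d0: "d > 0" and dh: "\<And>h. h > 0 \<Longrightarrow> h < d \<Longrightarrow> ?f (1 - h) < ?f 1"
    using DERIV_pos_inc_left[OF d] assms by auto
  define h where "h = min (d / 2) (1 / 2)"
  have h: "h > 0" "h < d" "h < 1" using d0 by (auto simp: h_def)
  have "?f 1 = 1" using assms by simp
  then have "?f (1 - h) < 1" using dh h by simp
  then show ?thesis using h by (intro exI[of _ "1 - h"]) auto
qed

lemma npow_lim:
  fixes rho :: real
  assumes "0 < rho" "rho < 1" "0 < t"
  shows "(\<lambda>n. real n ^ t * rho ^ n) \<longlonglongrightarrow> 0"
proof -
  define s where "s = rho powr (1 / real t)"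
  have s0: "0 < s" using assms by (simp add: s_def)
  have s1: "s < 1" unfolding s_def using assms powr_less_mono2[of "1 / real t" rho 1] by simp
  have st: "s ^ t = rho"
    unfolding s_def using assms by (simp add: powr_realpow[symmetric] powr_powr)
  have "(\<lambda>n. (real n * s ^ n) ^ t) \<longlonglongrightarrow> 0 ^ t"
    using powser_times_n_limit_0[of s] s0 s1 by (intro tendsto_intros) auto
  moreover have "(\<lambda>n. (real n * s ^ n) ^ t) = (\<lambda>n. real n ^ t * rho ^ n)"
    by (rule ext) (simp add: power_mult_distrib st[symmetric] power_mult[symmetric] mult.commute)
  ultimately show ?thesis using assms by (simp add: zero_power)
qed


lemma alg2:
  fixes a b c F P Pl Pn PT N Q :: real
  assumes "c \<noteq> 0" "F \<noteq> 0" "Q \<noteq> 0" "N \<noteq> 0" "Pn \<noteq> 0" "PT \<noteq> 0"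
  shows "a * (Pl * (b / c)) = (F * (Pn * PT) / (N * Q)) * ((Pl * Q / (c * F * PT)) * (N * (a * b / Pn)))"
  using assms by (simp add: field_simps)

lemma alg1:
  fixes F A PT Q N qt e :: real
  assumes "F \<noteq> 0" "PT \<noteq> 0" "Q \<noteq> 0" "N \<noteq> 0" "qt = 1 / (1 + e)" "e > 0"
  shows "F * A / (qt * Q * N / PT) = (F * (A * PT) / (N * Q)) * (1 + e)"
proof -
  have "1 + e \<noteq> 0" using assms by simp
  then show ?thesis unfolding assms(5) using assms(1-4) by (simp add: field_simps)
qed

theorem corollary1:
  fixes p l t :: nat and C :: "nat \<Rightarrow> nat list set"
  assumes "p \<ge> 2" and "l > 0" and "t > 0"
    and "\<And>n. tdc_code p n l t (C n)"
  shows "limsup (\<lambda>n. ereal (real (card (C n)) /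
           (fact t * real p ^ (n + t * (l + 1)) / (real n * real (p - 1)) ^ t))) \<le> 1"
proof (rule ereal_le_epsilon2)
  fix e :: real assume e: "0 < e"
  define P where "P = real p"
  have P1: "1 < P" using assms(1) by (simp add: P_def)
  have Pm: "real (p - 1) = P - 1" using assms(1) by (simp add: P_def of_nat_diff)
  have Pm': "real (p - Suc 0) = real p - 1" using assms(1) by (simp add: of_nat_diff)
  define q where "q = 1 / ((1 + e) powr (1 / real t))"
  have qq: "(1 + e) powr (1 / real t) > 1" using e assms(3) powr_less_mono2[of "1 / real t" 1 "1 + e"] by simp
  then have q0: "0 < q" and q1: "q < 1" unfolding q_def by (auto simp: divide_less_eq)
  have qt: "q ^ t = 1 / (1 + e)"
  proof -
    have "((1 + e) powr (1 / real t)) ^ t = 1 + e"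
      using e assms(3) by (simp add: powr_realpow[symmetric] powr_powr)
    then show ?thesis by (simp add: q_def power_divide)
  qed
  define dl where "dl = q * (P - 1) / P"
  have dl0: "0 < dl" using q0 P1 by (simp add: dl_def)
  have dl1: "dl < (P - 1) / P" using q1 P1 unfolding dl_def by (intro divide_strict_right_mono) auto
  obtain lam where lam: "0 < lam" "lam < 1" and rho1: "lam powr (- dl) * (1 + (P - 1) * lam) / P < 1"
    using exists_lam[OF dl0 dl1 P1] by blast
  define rho where "rho = lam powr (- dl) * (1 + (P - 1) * lam) / P"
  have "0 < 1 + (P - 1) * lam" using lam P1 by (simp add: add_pos_nonneg)
  then have rho0: "0 < rho" using lam P1 unfolding rho_def by (intro divide_pos_pos mult_pos_pos) auto
  define Cst where "Cst = P ^ l * (P - 1) ^ t / ((1 + (P - 1) * lam) ^ l * fact t * P ^ (t * l + t))"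
  have bound: "real (card (C n)) / (fact t * real p ^ (n + t * (l + 1)) / (real n * real (p - 1)) ^ t)
      \<le> (1 + e) + Cst * (real n ^ t * rho ^ n)" if n: "n \<ge> max l 1" for n
  proof -
    define K where "K = dl * real n"
    have K0: "0 < K" using dl0 n by (simp add: K_def)
    define D where "D = fact t * P ^ (n + t * (l + 1)) / (real n * (P - 1)) ^ t"
    have D0: "0 < D" using P1 n by (simp add: D_def)
    have cb: "real (card (C n)) \<le> fact t * P ^ (n + l * t) / K ^ t
           + lam powr (- K) * (P ^ l * (1 + (P - 1) * lam) ^ (n - l))"
      using card_bound[OF assms(4) assms(2) _ K0 lam(1) less_imp_le[OF lam(2)]] n
      by (simp add: P_def Pm')
    have I1: "fact t * P ^ (n + l * t) / K ^ t = D * (1 + e)"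
    proof -
      have "K ^ t = q ^ t * (P - 1) ^ t * real n ^ t / P ^ t"
        by (simp add: K_def dl_def power_mult_distrib power_divide)
      moreover have "P ^ (n + t * (l + 1)) = P ^ (n + l * t) * P ^ t"
        by (simp add: power_add[symmetric] algebra_simps)
      ultimately show ?thesis unfolding D_def power_mult_distrib
        using alg1[of "fact t" "P ^ t" "(P - 1) ^ t" "real n ^ t" "q ^ t" e "P ^ (n + l * t)"] qt e P1 n
        by simp
    qed
    have I2: "lam powr (- K) * (P ^ l * (1 + (P - 1) * lam) ^ (n - l)) = D * (Cst * (real n ^ t * rho ^ n))"
    proof -
      have a: "lam powr (- K) = (lam powr (- dl)) ^ n"
        using lam by (simp add: K_def powr_realpow[symmetric] powr_powr)
      have bpos: "0 < 1 + (P - 1) * lam" using P1 lam by (simp add: add_pos_nonneg)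
      have b: "(1 + (P - 1) * lam) ^ (n - l) = (1 + (P - 1) * lam) ^ n / (1 + (P - 1) * lam) ^ l"
        using bpos n by (simp add: power_diff)
      have r: "rho ^ n = (lam powr (- dl)) ^ n * (1 + (P - 1) * lam) ^ n / P ^ n"
        by (simp add: rho_def power_mult_distrib power_divide)
      have pp: "P ^ (n + t * (l + 1)) = P ^ n * P ^ (t * l + t)"
        by (simp add: power_add[symmetric] algebra_simps)
      show ?thesis unfolding a b r D_def Cst_def pp power_mult_distrib
        using alg2[of "(1 + (P - 1) * lam) ^ l" "fact t" "(P - 1) ^ t" "real n ^ t" "P ^ n" "P ^ (t * l + t)"
            "(lam powr (- dl)) ^ n" "P ^ l" "(1 + (P - 1) * lam) ^ n"] bpos P1 n
        by simp
    qed
    have "real (card (C n)) \<le> D * ((1 + e) + Cst * (real n ^ t * rho ^ n))"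
      using cb I1 I2 by (simp add: distrib_left)
    then have "real (card (C n)) / D \<le> (1 + e) + Cst * (real n ^ t * rho ^ n)"
      using D0 by (simp add: pos_divide_le_eq mult.commute)
    then show ?thesis by (simp add: D_def P_def Pm[unfolded P_def, symmetric])
  qed
  have lim: "(\<lambda>n. (1 + e) + Cst * (real n ^ t * rho ^ n)) \<longlonglongrightarrow> (1 + e) + Cst * 0"
    using npow_lim[OF rho0 _ assms(3)] rho1 by (intro tendsto_intros) (simp_all add: rho_def)
  have "limsup (\<lambda>n. ereal (real (card (C n)) /
           (fact t * real p ^ (n + t * (l + 1)) / (real n * real (p - 1)) ^ t)))
        \<le> limsup (\<lambda>n. ereal ((1 + e) + Cst * (real n ^ t * rho ^ n)))"
    using bound by (intro Limsup_mono eventually_sequentiallyI[of "max l 1"]) auto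
  also have "\<dots> = ereal (1 + e)"
    using lim by (intro lim_imp_Limsup) (auto intro: tendsto_ereal)
  also have "ereal (1 + e) = 1 + ereal e" by (simp add: one_ereal_def)
  finally show "limsup (\<lambda>n. ereal (real (card (C n)) /
           (fact t * real p ^ (n + t * (l + 1)) / (real n * real (p - 1)) ^ t))) \<le> 1 + ereal e" .
qed

end
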